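(* Let $A=\sum_{j=1}^\infty E_j$, where $E_j$ are rank-one projections on a separable Hilbert space $H$ and the series converges in the strong operator topology. Let $\xi$ be a sequence whose entries consist of the entries of $\mu=\langle\mu_j\rangle_{j=1}^M$ and of $1-\lambda=\langle1-\lambda_j\rangle_{j=1}^N$ ($0\le M,N\le\infty$), where $0<\mu_j\le\frac12$ and $0<\lambda_j<\frac12$. If $\sum_{j=1}^M\mu_j=\infty$, then $\xi\in\operatorname{Adm}(A)$.
   Context: $\operatorname{Adm}(A)$ is the set of sequences $\xi\in\ell^\infty_+$ such that $A=\sum_j\xi_jP_j$ for some rank-one projections $P_j$ (series converging in the strong operator topology if infinite); admissibility is invariant under permutation of the sequence. *)

theory Defs
  imports "HOL-Analysis.Analysis"
begin

text \<open>The separable (necessarily infinite-dimensional) complex Hilbert space H is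
  modelled concretely as l2(nat) over the complex numbers: vectors are functions
  nat => complex with square-summable modulus.  Operators are functions on
  nat => complex; only their values on l2 matter.\<close>

definition l2 :: "(nat \<Rightarrow> complex) set" where
  "l2 = {x. summable (\<lambda>n. (cmod (x n))\<^sup>2)}"

definition l2_inner :: "(nat \<Rightarrow> complex) \<Rightarrow> (nat \<Rightarrow> complex) \<Rightarrow> complex" where
  "l2_inner x y = (\<Sum>n. x n * cnj (y n))"

definition l2_norm :: "(nat \<Rightarrow> complex) \<Rightarrow> real" where
  "l2_norm x = sqrt (\<Sum>n. (cmod (x n))\<^sup>2)"

definition rank_one_proj :: "((nat \<Rightarrow> complex) \<Rightarrow> (nat \<Rightarrow> complex)) \<Rightarrow> bool" where
  "rank_one_proj P \<longleftrightarrow> (\<exists>e\<in>l2. l2_norm e = 1 \<and>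
      (\<forall>x\<in>l2. P x = (\<lambda>k. l2_inner x e * e k)))"

definition sot_sums ::
  "(nat \<Rightarrow> (nat \<Rightarrow> complex) \<Rightarrow> (nat \<Rightarrow> complex)) \<Rightarrow> ((nat \<Rightarrow> complex) \<Rightarrow> (nat \<Rightarrow> complex)) \<Rightarrow> bool" where
  "sot_sums T A \<longleftrightarrow> (\<forall>x\<in>l2. A x \<in> l2 \<and>
      (\<lambda>n. l2_norm (\<lambda>k. (\<Sum>j<n. T j x k) - A x k)) \<longlonglongrightarrow> 0)"

definition Adm :: "((nat \<Rightarrow> complex) \<Rightarrow> (nat \<Rightarrow> complex)) \<Rightarrow> (nat \<Rightarrow> real) set" where
  "Adm A = {\<xi>. (\<forall>j. 0 \<le> \<xi> j) \<and> bounded (range \<xi>) \<and>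
      (\<exists>P. (\<forall>j. rank_one_proj (P j)) \<and>
           sot_sums (\<lambda>j x k. complex_of_real (\<xi> j) * P j x k) A)}"

end

theory Submission
  imports Defs
begin

definition nsq :: "(nat \<Rightarrow> complex) \<Rightarrow> real" where
  "nsq x = (\<Sum>n. (cmod (x n))\<^sup>2)"

lemma sq_sum_le: "(a+b)^2 \<le> 2*a^2 + 2*(b::real)^2"
proof -
  have "0 \<le> (a-b)^2" by simp
  then show ?thesis by (simp add: power2_eq_square algebra_simps)
qed

lemma prod_le_sq: "a * b \<le> a^2 + (b::real)^2" if "0 \<le> a" "0 \<le> b"
proof -
  have "0 \<le> (a-b)^2" by simp
  then have "2*(a*b) \<le> a^2+b^2" by (simp add: power2_eq_square algebra_simps)
  moreover have "0 \<le> a*b" using that by simp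
  ultimately show ?thesis by linarith
qed

lemma l2_norm_nsq: "l2_norm x = sqrt (nsq x)"
  by (simp add: l2_norm_def nsq_def)

lemma l2_summable: "x \<in> l2 \<Longrightarrow> summable (\<lambda>n. (cmod (x n))\<^sup>2)"
  by (simp add: l2_def)

lemma nsq_nonneg: "x \<in> l2 \<Longrightarrow> 0 \<le> nsq x"
  unfolding nsq_def by (intro suminf_nonneg) (auto simp: l2_def)

lemma l2_zero: "(\<lambda>k. 0) \<in> l2"
  by (simp add: l2_def)

lemma l2_scale: "x \<in> l2 \<Longrightarrow> (\<lambda>k. c * x k) \<in> l2"
  unfolding l2_def by (simp add: norm_mult power_mult_distrib summable_mult)

lemma l2_add: assumes "x \<in> l2" "y \<in> l2" shows "(\<lambda>k. x k + y k) \<in> l2"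
proof -
  have "summable (\<lambda>k. 2 * (cmod (x k))\<^sup>2 + 2 * (cmod (y k))\<^sup>2)"
    using assms by (intro summable_add summable_mult) (auto simp: l2_def)
  moreover have "norm ((cmod (x k + y k))\<^sup>2) \<le> 2 * (cmod (x k))\<^sup>2 + 2 * (cmod (y k))\<^sup>2" for k
  proof -
    have "cmod (x k + y k) \<le> cmod (x k) + cmod (y k)" by (rule norm_triangle_ineq)
    hence "(cmod (x k + y k))\<^sup>2 \<le> (cmod (x k) + cmod (y k))\<^sup>2"
      by (simp add: power_mono)
    also have "\<dots> \<le> 2 * (cmod (x k))\<^sup>2 + 2 * (cmod (y k))\<^sup>2"
      by (rule sq_sum_le)
    finally show ?thesis by simp
  qed
  ultimately have "summable (\<lambda>k. (cmod (x k + y k))\<^sup>2)"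
    by (rule summable_comparison_test'[where N=0])
  then show ?thesis unfolding l2_def by simp
qed

lemma l2_sum: "finite S \<Longrightarrow> (\<And>j. j \<in> S \<Longrightarrow> f j \<in> l2) \<Longrightarrow> (\<lambda>k. \<Sum>j\<in>S. f j k) \<in> l2"
proof (induction S rule: finite_induct)
  case empty then show ?case by (simp add: l2_zero)
next
  case (insert a S)
  then show ?case using l2_add[of "f a" "\<lambda>k. \<Sum>j\<in>S. f j k"] by simp
qed

lemma l2_diff: assumes "x \<in> l2" "y \<in> l2" shows "(\<lambda>k. x k - y k) \<in> l2"
  using l2_add[OF assms(1) l2_scale[OF assms(2), of "-1"]] by simp

lemma inner_abs_summable: assumes "x \<in> l2" "y \<in> l2"
  shows "summable (\<lambda>k. cmod (x k) * cmod (y k))"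
proof -
  have "summable (\<lambda>k. (cmod (x k))\<^sup>2 + (cmod (y k))\<^sup>2)"
    using assms by (intro summable_add) (auto simp: l2_def)
  moreover have "norm (cmod (x k) * cmod (y k)) \<le> (cmod (x k))\<^sup>2 + (cmod (y k))\<^sup>2" for k
    by (simp add: prod_le_sq)
  ultimately show ?thesis by (rule summable_comparison_test'[where N=0])
qed

lemma inner_summable: assumes "x \<in> l2" "y \<in> l2"
  shows "summable (\<lambda>k. x k * cnj (y k))"
  by (rule summable_norm_cancel) (use inner_abs_summable[OF assms] in \<open>simp add: norm_mult\<close>)

lemma inner_add_left: assumes "x \<in> l2" "y \<in> l2" "z \<in> l2"
  shows "l2_inner (\<lambda>k. x k + y k) z = l2_inner x z + l2_inner y z"
  unfolding l2_inner_def using inner_summable[OF assms(1,3)] inner_summable[OF assms(2,3)]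
  by (simp add: distrib_right suminf_add)

lemma inner_scale_left: assumes "x \<in> l2" "z \<in> l2"
  shows "l2_inner (\<lambda>k. c * x k) z = c * l2_inner x z"
  unfolding l2_inner_def using inner_summable[OF assms]
  by (simp add: mult.assoc suminf_mult)

lemma inner_cnj: assumes "x \<in> l2" "y \<in> l2" shows "l2_inner y x = cnj (l2_inner x y)"
proof -
  have "(\<lambda>k. x k * cnj (y k)) sums l2_inner x y" unfolding l2_inner_def
    using inner_summable[OF assms] by (rule summable_sums)
  then have "(\<lambda>k. cnj (x k * cnj (y k))) sums cnj (l2_inner x y)" by (simp only: sums_cnj)
  then show ?thesis unfolding l2_inner_def by (simp add: sums_iff mult.commute)
qed

lemma inner_add_right: assumes "x \<in> l2" "y \<in> l2" "z \<in> l2"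
  shows "l2_inner z (\<lambda>k. x k + y k) = l2_inner z x + l2_inner z y"
  using assms inner_cnj[of "\<lambda>k. x k + y k" z] inner_add_left[OF assms] inner_cnj[of x z] inner_cnj[of y z]
  by (simp add: l2_add)

lemma inner_scale_right: assumes "x \<in> l2" "z \<in> l2"
  shows "l2_inner z (\<lambda>k. c * x k) = cnj c * l2_inner z x"
  using assms inner_cnj[of "\<lambda>k. c * x k" z] inner_scale_left[OF assms, of c] inner_cnj[of x z]
  by (simp add: l2_scale)

lemma inner_self: assumes "x \<in> l2" shows "l2_inner x x = complex_of_real (nsq x)"
proof -
  have "\<And>n. x n * cnj (x n) = complex_of_real ((cmod (x n))\<^sup>2)"
    by (rule complex_norm_square[symmetric])
  then have "l2_inner x x = (\<Sum>n. complex_of_real ((cmod (x n))\<^sup>2))"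
    unfolding l2_inner_def by presburger
  also have "\<dots> = complex_of_real (nsq x)"
    unfolding nsq_def using l2_summable[OF assms] by (simp add: suminf_of_real)
  finally show ?thesis .
qed

lemma inner_sum_left: assumes "finite S" "\<And>j. j \<in> S \<Longrightarrow> f j \<in> l2" "z \<in> l2"
  shows "l2_inner (\<lambda>k. \<Sum>j\<in>S. f j k) z = (\<Sum>j\<in>S. l2_inner (f j) z)"
  using assms(1,2)
proof (induction S rule: finite_induct)
  case empty then show ?case by (simp add: l2_inner_def)
next
  case (insert a S)
  then show ?case using inner_add_left[of "f a" "\<lambda>k. \<Sum>j\<in>S. f j k" z] assms(3) l2_sum[of S f]
    by simp
qed

lemma cauchy_schwarz: assumes "x \<in> l2" "y \<in> l2"
  shows "cmod (l2_inner x y) \<le> l2_norm x * l2_norm y"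
proof -
  have "cmod (l2_inner x y) \<le> (\<Sum>k. norm (x k * cnj (y k)))"
    unfolding l2_inner_def
    by (rule summable_norm) (use inner_abs_summable[OF assms] in \<open>simp add: norm_mult\<close>)
  also have "\<dots> = (\<Sum>k. cmod (x k) * cmod (y k))" by (simp add: norm_mult)
  also have "\<dots> \<le> l2_norm x * l2_norm y"
  proof (rule suminf_le_const[OF inner_abs_summable[OF assms]])
    fix n
    have "(\<Sum>k<n. cmod (x k) * cmod (y k)) \<le> L2_set (\<lambda>k. cmod (x k)) {..<n} * L2_set (\<lambda>k. cmod (y k)) {..<n}"
      using L2_set_mult_ineq[of "\<lambda>k. cmod (x k)" "\<lambda>k. cmod (y k)" "{..<n}"] by simp
    also have "\<dots> \<le> l2_norm x * l2_norm y"
    proof (rule mult_mono)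
      show "L2_set (\<lambda>k. cmod (x k)) {..<n} \<le> l2_norm x"
        unfolding L2_set_def l2_norm_def
        by (rule real_sqrt_le_mono, rule sum_le_suminf) (use l2_summable[OF assms(1)] in auto)
      show "L2_set (\<lambda>k. cmod (y k)) {..<n} \<le> l2_norm y"
        unfolding L2_set_def l2_norm_def
        by (rule real_sqrt_le_mono, rule sum_le_suminf) (use l2_summable[OF assms(2)] in auto)
    qed (auto simp: L2_set_def l2_norm_def intro!: suminf_nonneg l2_summable assms sum_nonneg)
    finally show "(\<Sum>k<n. cmod (x k) * cmod (y k)) \<le> l2_norm x * l2_norm y" .
  qed
  finally show ?thesis .
qed

lemma nsq_eq_Re: "x \<in> l2 \<Longrightarrow> nsq x = Re (l2_inner x x)"
  by (simp add: inner_self)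

lemma nsq_add: assumes "x \<in> l2" "y \<in> l2"
  shows "nsq (\<lambda>k. x k + y k) = nsq x + nsq y + 2 * Re (l2_inner x y)"
proof -
  have xy: "(\<lambda>k. x k + y k) \<in> l2" using assms by (rule l2_add)
  have "l2_inner (\<lambda>k. x k + y k) (\<lambda>k. x k + y k) = l2_inner x x + l2_inner x y + (l2_inner y x + l2_inner y y)"
    using assms xy by (simp add: inner_add_left inner_add_right)
  moreover have "Re (l2_inner y x) = Re (l2_inner x y)" using inner_cnj[OF assms] by simp
  ultimately show ?thesis using assms xy by (simp add: nsq_eq_Re)
qed

lemma nsq_scale: assumes "x \<in> l2" shows "nsq (\<lambda>k. c * x k) = (cmod c)\<^sup>2 * nsq x"
  unfolding nsq_def using l2_summable[OF assms]
  by (simp add: norm_mult power_mult_distrib suminf_mult)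

lemma l2_norm_nonneg: "x \<in> l2 \<Longrightarrow> 0 \<le> l2_norm x"
  by (simp add: l2_norm_nsq nsq_nonneg)

lemma l2_norm_scale: assumes "x \<in> l2" shows "l2_norm (\<lambda>k. c * x k) = cmod c * l2_norm x"
  by (simp add: l2_norm_nsq nsq_scale[OF assms] real_sqrt_mult)

lemma l2_triangle: assumes "x \<in> l2" "y \<in> l2"
  shows "l2_norm (\<lambda>k. x k + y k) \<le> l2_norm x + l2_norm y"
proof -
  have "nsq (\<lambda>k. x k + y k) \<le> nsq x + nsq y + 2 * (l2_norm x * l2_norm y)"
    using nsq_add[OF assms] cauchy_schwarz[OF assms] complex_Re_le_cmod[of "l2_inner x y"] by linarith
  also have "\<dots> = (l2_norm x + l2_norm y)\<^sup>2"
    using assms by (simp add: l2_norm_nsq power2_eq_square algebra_simps nsq_nonneg)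
  finally have "sqrt (nsq (\<lambda>k. x k + y k)) \<le> sqrt ((l2_norm x + l2_norm y)\<^sup>2)"
    by (rule real_sqrt_le_mono)
  also have "\<dots> = l2_norm x + l2_norm y"
    using l2_norm_nonneg[OF assms(1)] l2_norm_nonneg[OF assms(2)] by simp
  finally show ?thesis by (simp add: l2_norm_nsq)
qed

lemma key_ineq:
  fixes s c X Y :: real
  assumes "0 \<le> s" "0 \<le> c" "c^2 + s^2 = 1" "0 \<le> X" "0 \<le> Y"
  shows "(s*X + c*Y)^2 \<le> s * X^2 + 2 * Y^2"
proof (cases "s = 1")
  case True
  then have "c = 0" using assms by (simp add: power2_eq_square)
  then show ?thesis using True assms by simp
next
  case False
  have "s^2 \<le> 1" using assms(3) by (metis le_add_same_cancel2 zero_le_power2)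
  then have "s \<le> 1" using assms(1) by (metis abs_of_nonneg abs_square_le_1)
  then have s1: "s < 1" using False by simp
  have h: "(1-s) * (s * X^2 + 2 * Y^2 - (s*X + c*Y)^2) = s*((1-s)*X - c*Y)^2 + (1-s)^2 * Y^2 + (1 - c^2 - s^2) * Y^2"
    by (simp add: power2_eq_square algebra_simps)
  have "0 \<le> s*((1-s)*X - c*Y)^2 + (1-s)^2 * Y^2" using assms by simp
  then have "0 \<le> (1-s) * (s * X^2 + 2 * Y^2 - (s*X + c*Y)^2)" using h assms(3) by simp
  then show ?thesis using s1 by (simp add: zero_le_mult_iff)
qed

definition phase :: "complex \<Rightarrow> complex" where
  "phase p = (if p = 0 then 1 else \<i> * p / complex_of_real (cmod p))"

lemma phase_norm: "cmod (phase p) = 1"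
  by (auto simp: phase_def norm_mult norm_divide)

lemma phase_cnj: "cnj (phase p) * phase p = 1"
proof -
  have "cnj (phase p) * phase p = complex_of_real ((cmod (phase p))\<^sup>2)"
    by (metis complex_norm_square mult.commute)
  then show ?thesis by (simp add: phase_norm)
qed

lemma phase_Re: "Re (cnj (phase p) * p) = 0"
proof (cases "p = 0")
  case True then show ?thesis by simp
next
  case False
  have "cnj (phase p) * p = - \<i> * (cnj p * p) / complex_of_real (cmod p)"
    using False by (simp add: phase_def)
  also have "cnj p * p = complex_of_real ((cmod p)\<^sup>2)" by (metis complex_norm_square mult.commute)
  finally have "cnj (phase p) * p = - \<i> * complex_of_real ((cmod p)\<^sup>2 / cmod p)" by simp
  then show ?thesis by simp
qed

lemma rot:
  assumes d: "d \<in> l2" "nsq d = a" and e: "e \<in> l2" "nsq e = 1"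
    and cs: "0 \<le> c" "0 \<le> s" "c\<^sup>2 + s\<^sup>2 = 1"
    and om: "om = phase (l2_inner d e)"
    and w: "w = (\<lambda>k. complex_of_real c * d k + complex_of_real s * (om * e k))"
    and d': "d' = (\<lambda>k. complex_of_real (- s) * d k + complex_of_real c * (om * e k))"
  shows "w \<in> l2" "d' \<in> l2" "nsq w = c\<^sup>2 * a + s\<^sup>2" "nsq d' = s\<^sup>2 * a + c\<^sup>2"
    "\<And>z k. z \<in> l2 \<Longrightarrow> l2_inner z w * w k + l2_inner z d' * d' k = l2_inner z d * d k + l2_inner z e * e k"
    "\<And>z. z \<in> l2 \<Longrightarrow> (cmod (l2_inner z d'))\<^sup>2 \<le> s * (cmod (l2_inner z d))\<^sup>2 + 2 * (cmod (l2_inner z e))\<^sup>2"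
proof -
  define u where "u = (\<lambda>k. om * e k)"
  have u: "u \<in> l2" unfolding u_def by (rule l2_scale[OF e(1)])
  have nu: "nsq u = 1" unfolding u_def using nsq_scale[OF e(1), of om] e(2) om by (simp add: phase_norm)
  have re: "Re (l2_inner d u) = 0"
    unfolding u_def using inner_scale_right[OF e(1) d(1), of om] om phase_Re by simp
  have w': "w = (\<lambda>k. complex_of_real c * d k + complex_of_real s * u k)" using w u_def by simp
  have d'': "d' = (\<lambda>k. complex_of_real (-s) * d k + complex_of_real c * u k)" using d' u_def by simp
  have cd: "(\<lambda>k. complex_of_real c * d k) \<in> l2" "(\<lambda>k. complex_of_real (-s) * d k) \<in> l2"
    using l2_scale[OF d(1), of "complex_of_real c"] l2_scale[OF d(1), of "complex_of_real (-s)"] by auto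
  have su: "(\<lambda>k. complex_of_real s * u k) \<in> l2" "(\<lambda>k. complex_of_real c * u k) \<in> l2"
    using u by (auto intro: l2_scale)
  show wl: "w \<in> l2" unfolding w' using cd su by (intro l2_add)
  show dl: "d' \<in> l2" unfolding d'' using cd su by (intro l2_add)
  have "nsq w = c\<^sup>2 * a + s\<^sup>2 + 2 * Re (l2_inner (\<lambda>k. complex_of_real c * d k) (\<lambda>k. complex_of_real s * u k))"
    unfolding w' using nsq_add[OF cd(1) su(1)] nsq_scale[OF d(1)] nsq_scale[OF u] d(2) nu by simp
  also have "l2_inner (\<lambda>k. complex_of_real c * d k) (\<lambda>k. complex_of_real s * u k) = complex_of_real (c * s) * l2_inner d u"
    using inner_scale_left[OF d(1) su(1)] inner_scale_right[OF u d(1)] by simp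
  finally show "nsq w = c\<^sup>2 * a + s\<^sup>2" using re by simp
  have "nsq d' = s\<^sup>2 * a + c\<^sup>2 + 2 * Re (l2_inner (\<lambda>k. complex_of_real (-s) * d k) (\<lambda>k. complex_of_real c * u k))"
  proof -
    have n1: "nsq (\<lambda>k. complex_of_real (-s) * d k) = s\<^sup>2 * a"
      unfolding nsq_scale[OF d(1)] d(2) by simp
    have n2: "nsq (\<lambda>k. complex_of_real c * u k) = c\<^sup>2"
      unfolding nsq_scale[OF u] nu by simp
    show ?thesis unfolding d'' nsq_add[OF cd(2) su(2)] n1 n2 by simp
  qed
  also have "l2_inner (\<lambda>k. complex_of_real (-s) * d k) (\<lambda>k. complex_of_real c * u k) = complex_of_real (- s * c) * l2_inner d u"
    unfolding inner_scale_left[OF d(1) su(2)] inner_scale_right[OF u d(1)] by simp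
  finally show "nsq d' = s\<^sup>2 * a + c\<^sup>2" using re by simp
  fix z k assume z: "z \<in> l2"
  have iw: "l2_inner z w = complex_of_real c * l2_inner z d + complex_of_real s * l2_inner z u"
    unfolding w' using inner_add_right[OF cd(1) su(1) z] inner_scale_right[OF d(1) z] inner_scale_right[OF u z] by simp
  have id: "l2_inner z d' = complex_of_real (-s) * l2_inner z d + complex_of_real c * l2_inner z u"
    unfolding d'' inner_add_right[OF cd(2) su(2) z] inner_scale_right[OF d(1) z] inner_scale_right[OF u z] by simp
  have iu: "l2_inner z u = cnj om * l2_inner z e" unfolding u_def using inner_scale_right[OF e(1) z] by simp
  have cc: "complex_of_real c * complex_of_real c + complex_of_real s * complex_of_real s = 1"
    using cs(3) by (metis of_real_add of_real_mult of_real_1 power2_eq_square)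
  have "l2_inner z w * w k + l2_inner z d' * d' k
      = (complex_of_real c * complex_of_real c + complex_of_real s * complex_of_real s) * (l2_inner z d * d k + l2_inner z u * u k)"
    unfolding iw id unfolding w' d'' by (simp add: algebra_simps)
  also have "\<dots> = l2_inner z d * d k + l2_inner z e * e k"
  proof -
    have uk: "u k = om * e k" by (simp add: u_def)
    have "l2_inner z u * u k = cnj om * om * (l2_inner z e * e k)" unfolding iu uk by (simp add: algebra_simps)
    also have "\<dots> = l2_inner z e * e k" using phase_cnj[of "l2_inner d e"] om by simp
    finally show ?thesis unfolding cc by simp
  qed
  finally show "l2_inner z w * w k + l2_inner z d' * d' k = l2_inner z d * d k + l2_inner z e * e k" .
  have "cmod (l2_inner z d') \<le> s * cmod (l2_inner z d) + c * cmod (l2_inner z e)"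
  proof -
    have "cmod (l2_inner z d') \<le> cmod (complex_of_real (-s) * l2_inner z d) + cmod (complex_of_real c * l2_inner z u)"
      unfolding id by (rule norm_triangle_ineq)
    also have "\<dots> = s * cmod (l2_inner z d) + c * cmod (l2_inner z e)"
      using cs iu om by (simp add: norm_mult phase_norm)
    finally show ?thesis .
  qed
  then have "(cmod (l2_inner z d'))\<^sup>2 \<le> (s * cmod (l2_inner z d) + c * cmod (l2_inner z e))\<^sup>2"
    by (simp add: power_mono)
  also have "\<dots> \<le> s * (cmod (l2_inner z d))\<^sup>2 + 2 * (cmod (l2_inner z e))\<^sup>2"
    using key_ineq[of s c "cmod (l2_inner z d)" "cmod (l2_inner z e)"] cs by simp
  finally show "(cmod (l2_inner z d'))\<^sup>2 \<le> s * (cmod (l2_inner z d))\<^sup>2 + 2 * (cmod (l2_inner z e))\<^sup>2" .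
qed

type_synonym stt = "real \<times> nat \<times> (nat \<Rightarrow> complex)"

definition nxt :: "(nat \<Rightarrow> nat \<Rightarrow> complex) \<Rightarrow> real \<Rightarrow> stt \<Rightarrow> stt" where
  "nxt E t s = (case s of (a, m, d) \<Rightarrow>
     if t \<le> a then (a - t, m, \<lambda>k. complex_of_real (sqrt ((a - t) / a)) * d k)
     else (1 + a - t, Suc m, \<lambda>k. complex_of_real (- sqrt ((t - a) / (1 - a))) * d k
             + complex_of_real (sqrt ((1 - t) / (1 - a))) * (phase (l2_inner d (E m)) * E m k)))"

definition wv :: "(nat \<Rightarrow> nat \<Rightarrow> complex) \<Rightarrow> real \<Rightarrow> stt \<Rightarrow> (nat \<Rightarrow> complex)" where
  "wv E t s = (case s of (a, m, d) \<Rightarrow>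
     if t \<le> a then (\<lambda>k. complex_of_real (sqrt (t / a)) * d k)
     else (\<lambda>k. complex_of_real (sqrt ((1 - t) / (1 - a))) * d k
             + complex_of_real (sqrt ((t - a) / (1 - a))) * (phase (l2_inner d (E m)) * E m k)))"

lemma step:
  assumes t: "0 < t" "t \<le> 1" and a: "0 \<le> a" "a < 1" and d: "d \<in> l2" "nsq d = a"
    and Em: "E m \<in> l2" "nsq (E m) = 1"
    and nx: "nxt E t (a, m, d) = (a', m', d')" and wd: "w = wv E t (a, m, d)"
  shows "0 \<le> a'" "a' < 1" "d' \<in> l2" "nsq d' = a'" "w \<in> l2" "nsq w = t"
    "real m' = real m + a' + t - a" "m' = m \<or> m' = Suc m"
    "\<And>z k. z \<in> l2 \<Longrightarrow> l2_inner z w * w k + l2_inner z d' * d' k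
        = l2_inner z d * d k + (if m' = Suc m then l2_inner z (E m) * E m k else 0)"
    "\<And>z. z \<in> l2 \<Longrightarrow> (cmod (l2_inner z d'))\<^sup>2 \<le> (if t \<le> 1/2 then 1 - t/2 else 1) * (cmod (l2_inner z d))\<^sup>2
        + 2 * (if m' = Suc m then (cmod (l2_inner z (E m)))\<^sup>2 else 0)"
proof -
  have "(0 \<le> a' \<and> a' < 1 \<and> d' \<in> l2 \<and> nsq d' = a' \<and> w \<in> l2 \<and> nsq w = t \<and>
    real m' = real m + a' + t - a \<and> (m' = m \<or> m' = Suc m)) \<and>
    (\<forall>z k. z \<in> l2 \<longrightarrow> l2_inner z w * w k + l2_inner z d' * d' k
        = l2_inner z d * d k + (if m' = Suc m then l2_inner z (E m) * E m k else 0)) \<and>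
    (\<forall>z. z \<in> l2 \<longrightarrow> (cmod (l2_inner z d'))\<^sup>2 \<le> (if t \<le> 1/2 then 1 - t/2 else 1) * (cmod (l2_inner z d))\<^sup>2
        + 2 * (if m' = Suc m then (cmod (l2_inner z (E m)))\<^sup>2 else 0))"
  proof (cases "t \<le> a")
    case True
    then have apos: "0 < a" using t by simp
    define p where "p = sqrt ((a - t) / a)"
    define q where "q = sqrt (t / a)"
    have eqs: "a' = a - t" "m' = m" "d' = (\<lambda>k. complex_of_real p * d k)"
      using nx True unfolding nxt_def p_def by auto
    have weq: "w = (\<lambda>k. complex_of_real q * d k)" using wd True unfolding wv_def q_def by auto
    have p2: "p\<^sup>2 = (a - t) / a" unfolding p_def using True apos by simp
    have q2: "q\<^sup>2 = t / a" unfolding q_def using t apos by simp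
    have pq: "p\<^sup>2 + q\<^sup>2 = 1"
    proof -
      have "(a-t)/a + t/a = (a - t + t)/a" by (rule add_divide_distrib[symmetric])
      then show ?thesis unfolding p2 q2 using apos by simp
    qed
    have pq': "complex_of_real q * complex_of_real q + complex_of_real p * complex_of_real p = 1"
      using pq by (metis add.commute of_real_add of_real_mult of_real_1 power2_eq_square)
    have part1: "0 \<le> a' \<and> a' < 1 \<and> d' \<in> l2 \<and> nsq d' = a' \<and> w \<in> l2 \<and> nsq w = t \<and>
      real m' = real m + a' + t - a \<and> (m' = m \<or> m' = Suc m)"
      using True a t d apos unfolding eqs weq
      by (auto simp: l2_scale nsq_scale p2 q2)
    have part2: "l2_inner z w * w k + l2_inner z d' * d' k
        = l2_inner z d * d k + (if m' = Suc m then l2_inner z (E m) * E m k else 0)" if z: "z \<in> l2" for z k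
    proof -
      have "l2_inner z w * w k + l2_inner z d' * d' k
          = (complex_of_real q * complex_of_real q + complex_of_real p * complex_of_real p) * (l2_inner z d * d k)"
        unfolding eqs weq inner_scale_right[OF d(1) z] by (simp add: algebra_simps)
      then show ?thesis using pq' eqs by simp
    qed
    have part3: "(cmod (l2_inner z d'))\<^sup>2 \<le> (if t \<le> 1/2 then 1 - t/2 else 1) * (cmod (l2_inner z d))\<^sup>2
        + 2 * (if m' = Suc m then (cmod (l2_inner z (E m)))\<^sup>2 else 0)" if z: "z \<in> l2" for z
    proof -
      have "(cmod (l2_inner z d'))\<^sup>2 = p\<^sup>2 * (cmod (l2_inner z d))\<^sup>2"
        unfolding eqs inner_scale_right[OF d(1) z] by (simp add: norm_mult power_mult_distrib)
      also have "\<dots> \<le> (if t \<le> 1/2 then 1 - t/2 else 1) * (cmod (l2_inner z d))\<^sup>2"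
      proof (rule mult_right_mono)
        have "(a - t) / a \<le> 1 - t"
          using apos a t by (simp add: field_simps mult_left_le)
        then show "p\<^sup>2 \<le> (if t \<le> 1/2 then 1 - t/2 else 1)" using p2 t by auto
      qed simp
      finally show ?thesis using eqs by simp
    qed
    show ?thesis using part1 part2 part3 by blast
  next
    case False
    define c where "c = sqrt ((1 - t) / (1 - a))"
    define s where "s = sqrt ((t - a) / (1 - a))"
    define om where "om = phase (l2_inner d (E m))"
    have eqs: "a' = 1 + a - t" "m' = Suc m"
      "d' = (\<lambda>k. complex_of_real (- s) * d k + complex_of_real c * (om * E m k))"
      using nx False unfolding nxt_def c_def s_def om_def by auto
    have weq: "w = (\<lambda>k. complex_of_real c * d k + complex_of_real s * (om * E m k))"
      using wd False unfolding wv_def c_def s_def om_def by auto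
    have c2: "c\<^sup>2 = (1 - t) / (1 - a)" unfolding c_def using t a by simp
    have s2: "s\<^sup>2 = (t - a) / (1 - a)" unfolding s_def using False a by simp
    have cs: "0 \<le> c" "0 \<le> s" "c\<^sup>2 + s\<^sup>2 = 1"
      unfolding c_def s_def using t a False by (auto simp: c2[unfolded c_def] s2[unfolded s_def] field_simps)
    note R = rot[OF d Em cs om_def weq eqs(3)]
    have a1: "1 - a \<noteq> 0" using a by simp
    have "(1 - t) / (1 - a) * a + (t - a) / (1 - a) = ((1 - t) * a + (t - a)) / (1 - a)"
      by (simp add: add_divide_distrib)
    also have "(1 - t) * a + (t - a) = t * (1 - a)" by (simp add: algebra_simps)
    finally have nw: "nsq w = t" unfolding R(3) c2 s2 using a1 by simp
    have "(t - a) / (1 - a) * a + (1 - t) / (1 - a) = ((t - a) * a + (1 - t)) / (1 - a)"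
      by (simp add: add_divide_distrib)
    also have "(t - a) * a + (1 - t) = (1 + a - t) * (1 - a)" by (simp add: algebra_simps)
    finally have "(t - a) / (1 - a) * a + (1 - t) / (1 - a) = a'" using a1 eqs(1) by simp
    then have nd: "nsq d' = a'" using R(4) unfolding c2 s2 by simp
    have part1: "0 \<le> a' \<and> a' < 1 \<and> d' \<in> l2 \<and> nsq d' = a' \<and> w \<in> l2 \<and> nsq w = t \<and>
      real m' = real m + a' + t - a \<and> (m' = m \<or> m' = Suc m)"
      using False a t R(1,2) nw nd eqs by auto
    have sb: "s \<le> (if t \<le> 1/2 then 1 - t/2 else 1)"
    proof -
      have "s\<^sup>2 \<le> t" unfolding s2 using a t False by (simp add: field_simps mult_left_le)
      have "s \<le> 1" using cs by (metis abs_of_nonneg abs_square_le_1 le_add_same_cancel2 zero_le_power2)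
      moreover have "s \<le> 1 - t/2" if "t \<le> 1/2"
      proof -
        have h8: "t * 8 \<le> t * t + 4" using that zero_le_square[of t] by linarith
        have "t \<le> (1 - t/2)\<^sup>2" using h8 by (simp add: power2_eq_square field_simps)
        then have "s\<^sup>2 \<le> (1 - t/2)\<^sup>2" using \<open>s\<^sup>2 \<le> t\<close> by linarith
        then show ?thesis using that by (simp add: power2_le_iff_abs_le)
      qed
      ultimately show ?thesis by simp
    qed
    have part3: "(cmod (l2_inner z d'))\<^sup>2 \<le> (if t \<le> 1/2 then 1 - t/2 else 1) * (cmod (l2_inner z d))\<^sup>2
        + 2 * (if m' = Suc m then (cmod (l2_inner z (E m)))\<^sup>2 else 0)" if z: "z \<in> l2" for z
    proof -
      have "s * (cmod (l2_inner z d))\<^sup>2 \<le> (if t \<le> 1/2 then 1 - t/2 else 1) * (cmod (l2_inner z d))\<^sup>2"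
        by (rule mult_right_mono[OF sb]) simp
      then show ?thesis using R(6)[OF z] eqs by simp
    qed
    show ?thesis using part1 R(5) part3 eqs by auto
  qed
  then show "0 \<le> a'" "a' < 1" "d' \<in> l2" "nsq d' = a'" "w \<in> l2" "nsq w = t"
    "real m' = real m + a' + t - a" "m' = m \<or> m' = Suc m"
    "\<And>z k. z \<in> l2 \<Longrightarrow> l2_inner z w * w k + l2_inner z d' * d' k
        = l2_inner z d * d k + (if m' = Suc m then l2_inner z (E m) * E m k else 0)"
    "\<And>z. z \<in> l2 \<Longrightarrow> (cmod (l2_inner z d'))\<^sup>2 \<le> (if t \<le> 1/2 then 1 - t/2 else 1) * (cmod (l2_inner z d))\<^sup>2
        + 2 * (if m' = Suc m then (cmod (l2_inner z (E m)))\<^sup>2 else 0)"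
    by blast+
qed

primrec st :: "(nat \<Rightarrow> nat \<Rightarrow> complex) \<Rightarrow> (nat \<Rightarrow> real) \<Rightarrow> nat \<Rightarrow> stt" where
  "st E x 0 = (0, 0, \<lambda>k. 0)"
| "st E x (Suc n) = nxt E (x n) (st E x n)"

definition "al E x n = fst (st E x n)"
definition "mm E x n = fst (snd (st E x n))"
definition "dd E x n = snd (snd (st E x n))"
definition "ww E x n = wv E (x n) (st E x n)"

lemma st_eq: "st E x n = (al E x n, mm E x n, dd E x n)"
  by (simp add: al_def mm_def dd_def)

lemma st_Suc: "nxt E (x n) (al E x n, mm E x n, dd E x n) = (al E x (Suc n), mm E x (Suc n), dd E x (Suc n))"
  by (metis st.simps(2) st_eq)

lemma ww_eq: "ww E x n = wv E (x n) (al E x n, mm E x n, dd E x n)"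
  by (simp add: ww_def st_eq)

definition GG :: "(nat \<Rightarrow> nat \<Rightarrow> complex) \<Rightarrow> (nat \<Rightarrow> complex) \<Rightarrow> nat \<Rightarrow> real" where
  "GG E z m = (\<Sum>j<m. (cmod (l2_inner z (E j)))\<^sup>2)"

context
  fixes E :: "nat \<Rightarrow> nat \<Rightarrow> complex" and x :: "nat \<Rightarrow> real"
  assumes E: "\<And>j. E j \<in> l2" "\<And>j. nsq (E j) = 1"
    and x: "\<And>n. 0 < x n" "\<And>n. x n \<le> 1"
begin

lemma st_inv:
  "0 \<le> al E x n \<and> al E x n < 1 \<and> dd E x n \<in> l2 \<and> nsq (dd E x n) = al E x n \<and>
   real (mm E x n) = al E x n + (\<Sum>i<n. x i) \<and>
   (\<forall>z\<in>l2. \<forall>k. (\<Sum>i<n. l2_inner z (ww E x i) * ww E x i k) + l2_inner z (dd E x n) * dd E x n k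
      = (\<Sum>j<mm E x n. l2_inner z (E j) * E j k))"
proof (induction n)
  case 0
  have "dd E x 0 = (\<lambda>k. 0)" "al E x 0 = 0" "mm E x 0 = 0" by (simp_all add: al_def dd_def mm_def)
  then show ?case using l2_zero by (simp add: nsq_def)
next
  case (Suc n)
  note S = step[where t="x n" and a="al E x n" and d="dd E x n" and E=E and m="mm E x n" and a'="al E x (Suc n)" and m'="mm E x (Suc n)" and d'="dd E x (Suc n)" and w="ww E x n", OF x(1)[of n] x(2)[of n] _ _ _ _ E(1) E(2) st_Suc ww_eq]
  have IH: "0 \<le> al E x n" "al E x n < 1" "dd E x n \<in> l2" "nsq (dd E x n) = al E x n"
    "real (mm E x n) = al E x n + (\<Sum>i<n. x i)"
    "\<And>z k. z \<in> l2 \<Longrightarrow> (\<Sum>i<n. l2_inner z (ww E x i) * ww E x i k) + l2_inner z (dd E x n) * dd E x n k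
      = (\<Sum>j<mm E x n. l2_inner z (E j) * E j k)"
    using Suc by auto
  note S' = S[OF IH(1-4)]
  have "real (mm E x (Suc n)) = al E x (Suc n) + (\<Sum>i<Suc n. x i)"
    using S'(7) IH(5) by simp
  moreover have "(\<Sum>i<Suc n. l2_inner z (ww E x i) * ww E x i k) + l2_inner z (dd E x (Suc n)) * dd E x (Suc n) k
      = (\<Sum>j<mm E x (Suc n). l2_inner z (E j) * E j k)" if z: "z \<in> l2" for z k
  proof -
    have "(\<Sum>i<Suc n. l2_inner z (ww E x i) * ww E x i k) + l2_inner z (dd E x (Suc n)) * dd E x (Suc n) k
        = (\<Sum>i<n. l2_inner z (ww E x i) * ww E x i k) + (l2_inner z (ww E x n) * ww E x n k + l2_inner z (dd E x (Suc n)) * dd E x (Suc n) k)"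
      by (simp add: algebra_simps)
    also have "\<dots> = (\<Sum>i<n. l2_inner z (ww E x i) * ww E x i k) + l2_inner z (dd E x n) * dd E x n k
        + (if mm E x (Suc n) = Suc (mm E x n) then l2_inner z (E (mm E x n)) * E (mm E x n) k else 0)"
      using S'(9)[OF z, of k] by (simp add: algebra_simps)
    also have "\<dots> = (\<Sum>j<mm E x (Suc n). l2_inner z (E j) * E j k)"
      using IH(6)[OF z, of k] S'(8) by auto
    finally show ?thesis .
  qed
  ultimately show ?case using S'(1-4) by auto
qed

lemma ww_props: "ww E x n \<in> l2" "nsq (ww E x n) = x n"
  using step[where t="x n" and a="al E x n" and d="dd E x n" and E=E and m="mm E x n" and a'="al E x (Suc n)" and m'="mm E x (Suc n)" and d'="dd E x (Suc n)" and w="ww E x n", OF x(1)[of n] x(2)[of n] _ _ _ _ E(1) E(2) st_Suc ww_eq] st_inv[of n] by auto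

lemma mm_Suc: "mm E x (Suc n) = mm E x n \<or> mm E x (Suc n) = Suc (mm E x n)"
  using step[where t="x n" and a="al E x n" and d="dd E x n" and E=E and m="mm E x n" and a'="al E x (Suc n)" and m'="mm E x (Suc n)" and d'="dd E x (Suc n)" and w="ww E x n", OF x(1)[of n] x(2)[of n] _ _ _ _ E(1) E(2) st_Suc ww_eq] st_inv[of n] by auto


lemma decay: assumes z: "z \<in> l2"
  shows "(cmod (l2_inner z (dd E x (Suc n))))\<^sup>2 \<le> (if x n \<le> 1/2 then 1 - x n/2 else 1) * (cmod (l2_inner z (dd E x n)))\<^sup>2
     + 2 * (GG E z (mm E x (Suc n)) - GG E z (mm E x n))"
proof -
  note S' = step[where t="x n" and a="al E x n" and d="dd E x n" and E=E and m="mm E x n" and a'="al E x (Suc n)" and m'="mm E x (Suc n)" and d'="dd E x (Suc n)" and w="ww E x n", OF x(1)[of n] x(2)[of n] _ _ _ _ E(1) E(2) st_Suc ww_eq]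
  have "GG E z (mm E x (Suc n)) - GG E z (mm E x n) = (if mm E x (Suc n) = Suc (mm E x n) then (cmod (l2_inner z (E (mm E x n))))\<^sup>2 else 0)"
    using mm_Suc[of n] unfolding GG_def by auto
  moreover have I: "0 \<le> al E x n" "al E x n < 1" "dd E x n \<in> l2" "nsq (dd E x n) = al E x n"
    using st_inv[of n] by auto
  ultimately show ?thesis using S'(10)[OF I z] by simp
qed

end

lemma vbound:
  fixes v eta B :: "nat \<Rightarrow> real"
  assumes rec: "\<And>n. v (Suc n) \<le> (1 - eta n / 2) * v n + 2 * (B (Suc n) - B n)"
    and v0: "\<And>n. 0 \<le> v n"
    and eta: "\<And>n. 0 \<le> eta n" "\<And>n. eta n \<le> 1"
    and Bmono: "\<And>n. B n \<le> B (Suc n)"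
  shows "v (K + t) \<le> v K * exp (- ((\<Sum>i<K+t. eta i) - (\<Sum>i<K. eta i)) / 2) + 2 * (B (K + t) - B K)"
proof (induction t)
  case 0 then show ?case by simp
next
  case (Suc t)
  let ?X = "exp (- ((\<Sum>i<K+t. eta i) - (\<Sum>i<K. eta i)) / 2)"
  have mB: "B K \<le> B (K + t)"
    using Bmono by (induction t) (auto intro: order_trans)
  have f0: "0 \<le> 1 - eta (K+t) / 2" using eta(2)[of "K+t"] by simp
  have f1: "1 - eta (K+t) / 2 \<le> 1" using eta(1)[of "K+t"] by simp
  have fe: "1 - eta (K+t) / 2 \<le> exp (- eta (K+t) / 2)"
    using exp_ge_add_one_self[of "- eta (K+t) / 2"] by simp
  have vX: "0 \<le> v K * ?X" using v0 by simp
  have "v (K + Suc t) \<le> (1 - eta (K+t) / 2) * v (K+t) + 2 * (B (Suc (K+t)) - B (K+t))"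
    using rec[of "K+t"] by simp
  also have "\<dots> \<le> (1 - eta (K+t) / 2) * (v K * ?X + 2 * (B (K + t) - B K)) + 2 * (B (Suc (K+t)) - B (K+t))"
    using Suc.IH f0 by (simp add: mult_left_mono)
  also have "\<dots> = (1 - eta (K+t) / 2) * (v K * ?X) + (1 - eta (K+t) / 2) * (2 * (B (K + t) - B K)) + 2 * (B (Suc (K+t)) - B (K+t))"
    by (simp add: algebra_simps)
  also have "\<dots> \<le> exp (- eta (K+t) / 2) * (v K * ?X) + 2 * (B (K + t) - B K) + 2 * (B (Suc (K+t)) - B (K+t))"
  proof -
    have "(1 - eta (K+t) / 2) * (v K * ?X) \<le> exp (- eta (K+t) / 2) * (v K * ?X)"
      using fe vX by (rule mult_right_mono)
    moreover have "(1 - eta (K+t) / 2) * (2 * (B (K + t) - B K)) \<le> 1 * (2 * (B (K + t) - B K))"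
      using f1 mB by (intro mult_right_mono) auto
    ultimately show ?thesis by simp
  qed
  also have "\<dots> = v K * exp (- ((\<Sum>i<K + Suc t. eta i) - (\<Sum>i<K. eta i)) / 2) + 2 * (B (K + Suc t) - B K)"
  proof -
    have "exp (- eta (K+t) / 2) * ?X = exp (- ((\<Sum>i<K + Suc t. eta i) - (\<Sum>i<K. eta i)) / 2)"
      by (simp add: exp_add[symmetric] field_simps)
    then show ?thesis by (simp add: algebra_simps)
  qed
  finally show ?case .
qed

lemma v_to_zero:
  fixes v eta B :: "nat \<Rightarrow> real"
  assumes rec: "\<And>n. v (Suc n) \<le> (1 - eta n / 2) * v n + 2 * (B (Suc n) - B n)"
    and v0: "\<And>n. 0 \<le> v n"
    and eta: "\<And>n. 0 \<le> eta n" "\<And>n. eta n \<le> 1"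
    and Bmono: "\<And>n. B n \<le> B (Suc n)"
    and Bconv: "convergent B"
    and H: "filterlim (\<lambda>n. \<Sum>i<n. eta i) at_top sequentially"
  shows "v \<longlonglongrightarrow> 0"
proof (rule LIMSEQ_I)
  fix r :: real assume r: "0 < r"
  obtain K where K: "\<And>m n. m \<ge> K \<Longrightarrow> n \<ge> K \<Longrightarrow> norm (B m - B n) < r / 4"
    using CauchyD[OF convergent_Cauchy[OF Bconv], of "r/4"] r by auto
  let ?g = "\<lambda>n. v K * exp (- ((\<Sum>i<n. eta i) - (\<Sum>i<K. eta i)) / 2)"
  have H1: "filterlim (\<lambda>n. (\<Sum>i<n. eta i) - (\<Sum>i<K. eta i)) at_top sequentially"
    by (rule filterlim_tendsto_add_at_top[OF tendsto_const H, of "- (\<Sum>i<K. eta i)", simplified])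
  have h2: "filterlim (\<lambda>n. (1/2) * ((\<Sum>i<n. eta i) - (\<Sum>i<K. eta i))) at_top sequentially"
    by (rule filterlim_tendsto_pos_mult_at_top[OF tendsto_const[of "1/2"] _ H1]) simp
  have eq: "(\<lambda>n. - (- ((\<Sum>i<n. eta i) - (\<Sum>i<K. eta i)) / 2)) = (\<lambda>n. (1/2) * ((\<Sum>i<n. eta i) - (\<Sum>i<K. eta i)))"
    by (auto simp: fun_eq_iff field_simps)
  have "filterlim (\<lambda>n. - ((\<Sum>i<n. eta i) - (\<Sum>i<K. eta i)) / 2) at_bot sequentially"
    unfolding filterlim_uminus_at_bot eq by (rule h2)
  then have "((\<lambda>n. exp (- ((\<Sum>i<n. eta i) - (\<Sum>i<K. eta i)) / 2)) \<longlongrightarrow> 0) sequentially"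
    by (rule filterlim_compose[OF exp_at_bot])
  then have "?g \<longlonglongrightarrow> v K * 0" by (intro tendsto_mult tendsto_const)
  then have "eventually (\<lambda>n. ?g n < r / 2) sequentially"
    using r by (intro order_tendstoD(2)) auto
  then obtain N where N: "\<And>n. n \<ge> N \<Longrightarrow> ?g n < r / 2" by (auto simp: eventually_sequentially)
  show "\<exists>no. \<forall>n\<ge>no. norm (v n - 0) < r"
  proof (intro exI allI impI)
    fix n assume n: "max N K \<le> n"
    then obtain t where t: "n = K + t" by (metis le_Suc_ex max.bounded_iff)
    have "v n \<le> ?g n + 2 * (B n - B K)"
      using vbound[where v=v and eta=eta and B=B and K=K and t=t, OF rec v0 eta Bmono] t by simp
    also have "\<dots> < r / 2 + 2 * (r / 4)"
    proof -
      have "?g n < r / 2" using N[of n] n by simp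
      moreover have "norm (B n - B K) < r / 4" using K[of n K] n by simp
      then have "B n - B K < r / 4" using abs_ge_self[of "B n - B K"] by (simp only: real_norm_def)
      ultimately show ?thesis by (intro add_strict_mono) auto
    qed
    finally show "norm (v n - 0) < r" using v0[of n] by simp
  qed
qed

lemma diverge:
  fixes mu :: "nat \<Rightarrow> real" and \<sigma> :: "nat \<Rightarrow> nat + nat" and M N :: enat and eta :: "nat \<Rightarrow> real"
  assumes mupos: "\<forall>j. enat j < M \<longrightarrow> 0 < mu j"
    and bij: "bij_betw \<sigma> UNIV ({j. enat j < M} <+> {j. enat j < N})"
    and dv: "(\<Sum>\<^sub>\<infinity>j\<in>{j. enat j < M}. ennreal (mu j)) = \<infinity>"
    and eta_def: "\<And>n. eta n = (case \<sigma> n of Inl j \<Rightarrow> mu j | Inr j \<Rightarrow> 0)"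
  shows "filterlim (\<lambda>n. \<Sum>i<n. eta i) at_top sequentially"
proof -
  have mem: "\<sigma> n \<in> {j. enat j < M} <+> {j. enat j < N}" for n
    using bij by (auto simp: bij_betw_def)
  have eta0: "0 \<le> eta n" for n
    using mem[of n] mupos unfolding eta_def by (cases "\<sigma> n") (auto simp: less_imp_le)
  have Hmono: "(\<Sum>i<m. eta i) \<le> (\<Sum>i<n. eta i)" if "m \<le> n" for m n
    using that eta0 by (intro sum_mono2) auto
  have inj: "inj \<sigma>" using bij by (simp add: bij_betw_def)
  show ?thesis unfolding filterlim_at_top
  proof
    fix Z
    show "eventually (\<lambda>n. Z \<le> (\<Sum>i<n. eta i)) sequentially"
    proof (rule ccontr)
      assume ne: "\<not> eventually (\<lambda>n. Z \<le> (\<Sum>i<n. eta i)) sequentially"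
      have lt: "(\<Sum>i<n. eta i) < Z" for n
      proof (rule ccontr)
        assume "\<not> (\<Sum>i<n. eta i) < Z"
        then have "\<forall>m\<ge>n. Z \<le> (\<Sum>i<m. eta i)" using Hmono by (meson not_le order_trans)
        then show False using ne by (auto simp: eventually_sequentially)
      qed
      have bnd: "sum mu F \<le> Z" if F: "finite F" "F \<subseteq> {j. enat j < M}" for F
      proof -
        define G where "G = {i. \<sigma> i \<in> Inl ` F}"
        have bG: "bij_betw (\<lambda>i. projl (\<sigma> i)) G F"
        proof (rule bij_betw_imageI)
          show "inj_on (\<lambda>i. projl (\<sigma> i)) G"
          proof (rule inj_onI)
            fix i1 i2 assume "i1 \<in> G" "i2 \<in> G" "projl (\<sigma> i1) = projl (\<sigma> i2)"
            then have "\<sigma> i1 = \<sigma> i2" unfolding G_def by auto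
            then show "i1 = i2" using inj by (simp add: inj_eq)
          qed
          show "(\<lambda>i. projl (\<sigma> i)) ` G = F"
          proof
            show "(\<lambda>i. projl (\<sigma> i)) ` G \<subseteq> F" unfolding G_def by auto
            show "F \<subseteq> (\<lambda>i. projl (\<sigma> i)) ` G"
            proof
              fix j assume j: "j \<in> F"
              then have "Inl j \<in> {j. enat j < M} <+> {j. enat j < N}" using F by auto
              then obtain i where "\<sigma> i = Inl j" using bij_betw_imp_surj_on[OF bij] by (metis imageE)
              then show "j \<in> (\<lambda>i. projl (\<sigma> i)) ` G" unfolding G_def using j by force
            qed
          qed
        qed
        have Gfin: "finite G" using bij_betw_finite[OF bG] F(1) by simp
        then obtain k where k: "G \<subseteq> {..<k}" using finite_nat_iff_bounded by blast
        have "sum mu F = (\<Sum>i\<in>G. mu (projl (\<sigma> i)))"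
          using sum.reindex_bij_betw[OF bG, of mu] by simp
        also have "\<dots> = (\<Sum>i\<in>G. eta i)"
          by (rule sum.cong) (auto simp: G_def eta_def)
        also have "\<dots> \<le> (\<Sum>i<k. eta i)" using k eta0 by (intro sum_mono2) auto
        also have "\<dots> \<le> Z" using lt[of k] by simp
        finally show ?thesis .
      qed
      have "(\<Sum>\<^sub>\<infinity>j\<in>{j. enat j < M}. ennreal (mu j)) = (SUP F\<in>{F. finite F \<and> F \<subseteq> {j. enat j < M}}. sum (\<lambda>j. ennreal (mu j)) F)"
        by (rule nonneg_infsum_complete) simp
      also have "\<dots> \<le> ennreal Z"
      proof (rule SUP_least)
        fix F assume "F \<in> {F. finite F \<and> F \<subseteq> {j. enat j < M}}"
        then have F: "finite F" "F \<subseteq> {j. enat j < M}" by auto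
        have "sum (\<lambda>j. ennreal (mu j)) F = ennreal (sum mu F)"
          using F mupos by (intro sum_ennreal) (auto simp: less_imp_le)
        also have "\<dots> \<le> ennreal Z" using bnd[OF F] by (rule ennreal_leI)
        finally show "sum (\<lambda>j. ennreal (mu j)) F \<le> ennreal Z" .
      qed
      finally show False using dv by (simp add: top_unique)
    qed
  qed
qed

lemma inner_diff_left: assumes "x \<in> l2" "y \<in> l2" "z \<in> l2"
  shows "l2_inner (\<lambda>k. x k - y k) z = l2_inner x z - l2_inner y z"
proof -
  have "l2_inner (\<lambda>k. x k + (-1) * y k) z = l2_inner x z + l2_inner (\<lambda>k. (-1) * y k) z"
    using assms l2_scale[OF assms(2), of "-1"] by (intro inner_add_left) auto
  also have "l2_inner (\<lambda>k. (-1) * y k) z = - l2_inner y z"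
    using inner_scale_left[OF assms(2,3), of "-1"] by simp
  finally show ?thesis by simp
qed

lemma GG_conv:
  fixes E :: "nat \<Rightarrow> (nat \<Rightarrow> complex) \<Rightarrow> (nat \<Rightarrow> complex)" and e :: "nat \<Rightarrow> nat \<Rightarrow> complex"
  assumes e: "\<And>j. e j \<in> l2" and Ee: "\<And>j x. x \<in> l2 \<Longrightarrow> E j x = (\<lambda>k. l2_inner x (e j) * e j k)"
    and A: "sot_sums E A" and z: "z \<in> l2"
  shows "convergent (\<lambda>m. \<Sum>j<m. (cmod (l2_inner z (e j)))\<^sup>2)"
proof -
  have Az: "A z \<in> l2" and F: "(\<lambda>n. l2_norm (\<lambda>k. (\<Sum>j<n. E j z k) - A z k)) \<longlonglongrightarrow> 0"
    using A z unfolding sot_sums_def by auto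
  define S where "S m = (\<lambda>k. \<Sum>j<m. l2_inner z (e j) * e j k)" for m
  have SE: "(\<lambda>k. \<Sum>j<m. E j z k) = S m" for m unfolding S_def using Ee[OF z] by simp
  have SE': "(\<Sum>j<m. E j z k) = S m k" for m k unfolding S_def using Ee[OF z] by simp
  have Sl: "S m \<in> l2" for m unfolding S_def by (intro l2_sum l2_scale e) simp
  have iS: "l2_inner (S m) z = complex_of_real (\<Sum>j<m. (cmod (l2_inner z (e j)))\<^sup>2)" for m
  proof -
    have "l2_inner (S m) z = (\<Sum>j<m. l2_inner (\<lambda>k. l2_inner z (e j) * e j k) z)"
      unfolding S_def by (rule inner_sum_left) (auto intro: l2_scale e z)
    also have "\<dots> = (\<Sum>j<m. l2_inner z (e j) * cnj (l2_inner z (e j)))"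
      using inner_scale_left[OF e z] inner_cnj[OF z e] by simp
    also have "\<dots> = (\<Sum>j<m. complex_of_real ((cmod (l2_inner z (e j)))\<^sup>2))"
      by (rule sum.cong) (simp_all only: complex_norm_square)
    finally show ?thesis by simp
  qed
  have "(\<lambda>m. l2_inner (S m) z - l2_inner (A z) z) \<longlonglongrightarrow> 0"
  proof (rule Lim_null_comparison)
    show "eventually (\<lambda>m. norm (l2_inner (S m) z - l2_inner (A z) z) \<le> l2_norm (\<lambda>k. (\<Sum>j<m. E j z k) - A z k) * l2_norm z) sequentially"
    proof (intro always_eventually allI)
      fix m
      have "l2_inner (S m) z - l2_inner (A z) z = l2_inner (\<lambda>k. S m k - A z k) z"
        using inner_diff_left[OF Sl Az z] by simp
      also have "cmod \<dots> \<le> l2_norm (\<lambda>k. S m k - A z k) * l2_norm z"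
        by (rule cauchy_schwarz[OF l2_diff[OF Sl Az] z])
      finally show "norm (l2_inner (S m) z - l2_inner (A z) z) \<le> l2_norm (\<lambda>k. (\<Sum>j<m. E j z k) - A z k) * l2_norm z"
        by (simp only: SE')
    qed
    show "(\<lambda>m. l2_norm (\<lambda>k. (\<Sum>j<m. E j z k) - A z k) * l2_norm z) \<longlonglongrightarrow> 0"
      using tendsto_mult_left_zero[OF F, of "l2_norm z"] by simp
  qed
  then have "(\<lambda>m. l2_inner (S m) z) \<longlonglongrightarrow> l2_inner (A z) z"
    by (rule LIM_zero_cancel)
  then have "(\<lambda>m. Re (l2_inner (S m) z)) \<longlonglongrightarrow> Re (l2_inner (A z) z)"
    by (rule tendsto_Re)
  then show ?thesis unfolding iS by (auto simp: convergent_def)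
qed

theorem lemma3p4:
  fixes E :: "nat \<Rightarrow> (nat \<Rightarrow> complex) \<Rightarrow> (nat \<Rightarrow> complex)"
    and A :: "(nat \<Rightarrow> complex) \<Rightarrow> (nat \<Rightarrow> complex)"
    and \<mu> lam :: "nat \<Rightarrow> real" and M N :: enat
    and \<xi> :: "nat \<Rightarrow> real" and \<sigma> :: "nat \<Rightarrow> nat + nat"
  assumes E_proj: "\<forall>j. rank_one_proj (E j)"
    and A_sum: "sot_sums E A"
    and \<mu>_range: "\<forall>j. enat j < M \<longrightarrow> 0 < \<mu> j \<and> \<mu> j \<le> 1/2"
    and lam_range: "\<forall>j. enat j < N \<longrightarrow> 0 < lam j \<and> lam j < 1/2"
    and \<sigma>_bij: "bij_betw \<sigma> UNIV ({j. enat j < M} <+> {j. enat j < N})"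
    and \<xi>_def: "\<forall>n. \<xi> n = (case \<sigma> n of Inl j \<Rightarrow> \<mu> j | Inr j \<Rightarrow> 1 - lam j)"
    and \<mu>_div: "(\<Sum>\<^sub>\<infinity>j\<in>{j. enat j < M}. ennreal (\<mu> j)) = \<infinity>"
  shows "\<xi> \<in> Adm A"
proof -
  have "\<forall>j. \<exists>v. v \<in> l2 \<and> l2_norm v = 1 \<and> (\<forall>x\<in>l2. E j x = (\<lambda>k. l2_inner x v * v k))"
    using E_proj unfolding rank_one_proj_def by blast
  then obtain e where e: "\<And>j. e j \<in> l2" "\<And>j. l2_norm (e j) = 1"
    "\<And>j x. x \<in> l2 \<Longrightarrow> E j x = (\<lambda>k. l2_inner x (e j) * e j k)"
    by metis
  have ne: "nsq (e j) = 1" for j using e(2)[of j] by (simp add: l2_norm_nsq)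
  have mem: "\<sigma> n \<in> {j. enat j < M} <+> {j. enat j < N}" for n
    using \<sigma>_bij by (auto simp: bij_betw_def)
  define eta where "eta n = (case \<sigma> n of Inl j \<Rightarrow> \<mu> j | Inr j \<Rightarrow> 0)" for n
  have xcase: "(\<exists>j. enat j < M \<and> \<xi> n = \<mu> j \<and> eta n = \<mu> j) \<or> (\<exists>j. enat j < N \<and> \<xi> n = 1 - lam j \<and> eta n = 0)" for n
    using mem[of n] \<xi>_def by (cases "\<sigma> n") (auto simp: eta_def)
  have xpos: "0 < \<xi> n" and xle: "\<xi> n \<le> 1" for n
    using xcase[of n] \<mu>_range lam_range by auto
  have H: "filterlim (\<lambda>n. \<Sum>i<n. eta i) at_top sequentially"
    by (rule diverge[of M \<mu> \<sigma> N]) (use \<mu>_range \<sigma>_bij \<mu>_div in \<open>auto simp: eta_def\<close>)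
  have eta: "0 \<le> eta n" "eta n \<le> 1" "eta n \<le> \<xi> n"
    "(if \<xi> n \<le> 1/2 then 1 - \<xi> n/2 else 1) \<le> 1 - eta n / 2" for n
    using xcase[of n] \<mu>_range lam_range xpos[of n] by auto
  note INV = st_inv[where E=e and x=\<xi>, OF e(1) ne xpos xle]
  note DEC = decay[where E=e and x=\<xi>, OF e(1) ne xpos xle]
  let ?al = "al e \<xi>" and ?mm = "mm e \<xi>" and ?dd = "dd e \<xi>" and ?ww = "ww e \<xi>"
  have mminf: "filterlim ?mm at_top sequentially"
  proof -
    have "filterlim (\<lambda>n. real (?mm n)) at_top sequentially"
    proof (rule filterlim_at_top_mono[OF H])
      show "eventually (\<lambda>n. (\<Sum>i<n. eta i) \<le> real (?mm n)) sequentially"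
      proof (intro always_eventually allI)
        fix n
        have "(\<Sum>i<n. eta i) \<le> (\<Sum>i<n. \<xi> i)" by (intro sum_mono eta)
        then show "(\<Sum>i<n. eta i) \<le> real (?mm n)" using INV[where n=n] by simp
      qed
    qed
    then show ?thesis unfolding filterlim_at_top
      by (metis (mono_tags, lifting) eventually_mono of_nat_le_iff)
  qed
  define f where "f j = (\<lambda>k. complex_of_real (1 / sqrt (\<xi> j)) * ?ww j k)" for j
  define P where "P j = (\<lambda>y k. l2_inner y (f j) * f j k)" for j
  have wl: "?ww j \<in> l2" "nsq (?ww j) = \<xi> j" for j using ww_props[where E=e and x=\<xi>, OF e(1) ne xpos xle] by auto
  have fl: "f j \<in> l2" for j unfolding f_def by (rule l2_scale[OF wl(1)])
  have fn: "l2_norm (f j) = 1" for j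
    unfolding f_def l2_norm_scale[OF wl(1)]
  proof -
    have "cmod (complex_of_real (1 / sqrt (\<xi> j))) = 1 / sqrt (\<xi> j)"
      using xpos[of j] by (simp only: norm_of_real) simp
    then show "cmod (complex_of_real (1 / sqrt (\<xi> j))) * l2_norm (ww e \<xi> j) = 1"
      using xpos[of j] wl(2)[of j] by (simp add: l2_norm_nsq)
  qed
  have Pterm: "complex_of_real (\<xi> j) * P j z k = l2_inner z (?ww j) * ?ww j k" if z: "z \<in> l2" for j z k
  proof -
    have "complex_of_real (\<xi> j) * P j z k = complex_of_real (\<xi> j * (1 / sqrt (\<xi> j)) * (1 / sqrt (\<xi> j))) * (l2_inner z (?ww j) * ?ww j k)"
    proof -
      have gen: "\<And>c X Y. complex_of_real (\<xi> j) * (cnj (complex_of_real c) * X * (complex_of_real c * Y)) = complex_of_real (\<xi> j * c * c) * (X * Y)"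
        by (simp add: algebra_simps)
      show ?thesis unfolding P_def f_def inner_scale_right[OF wl(1) z] by (rule gen)
    qed
    also have "\<xi> j * (1 / sqrt (\<xi> j)) * (1 / sqrt (\<xi> j)) = 1"
      using xpos[of j] by (simp add: field_simps)
    finally show ?thesis by simp
  qed
  show ?thesis unfolding Adm_def
  proof (intro CollectI conjI exI[of _ P] allI)
    show "0 \<le> \<xi> j" for j using xpos[of j] by simp
    show "bounded (range \<xi>)" unfolding bounded_iff
    proof (intro exI[of _ 1] ballI)
      fix y assume "y \<in> range \<xi>"
      then obtain n where "y = \<xi> n" by auto
      then show "norm y \<le> 1" using xpos[of n] xle[of n] by simp
    qed
    show "rank_one_proj (P j)" for j
      unfolding rank_one_proj_def using fl fn by (auto simp: P_def)
    show "sot_sums (\<lambda>j x k. complex_of_real (\<xi> j) * P j x k) A"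
      unfolding sot_sums_def
    proof
      fix z assume z: "z \<in> l2"
      have Az: "A z \<in> l2" and F: "(\<lambda>n. l2_norm (\<lambda>k. (\<Sum>j<n. E j z k) - A z k)) \<longlonglongrightarrow> 0"
        using A_sum z unfolding sot_sums_def by auto
      define S where "S m = (\<lambda>k. \<Sum>j<m. E j z k)" for m
      have Sl: "S m \<in> l2" for m unfolding S_def using e(3)[OF z] by (simp add: l2_sum l2_scale e(1))
      define v where "v n = (cmod (l2_inner z (?dd n)))\<^sup>2" for n
      define B where "B n = GG e z (?mm n)" for n
      have Bc: "convergent B"
      proof -
        have "GG e z = (\<lambda>m. \<Sum>j<m. (cmod (l2_inner z (e j)))\<^sup>2)" by (simp add: fun_eq_iff GG_def)
        then obtain L where "(\<lambda>m. GG e z m) \<longlonglongrightarrow> L"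
          using GG_conv[OF e(1) e(3) A_sum z] unfolding convergent_def by auto
        then have "B \<longlonglongrightarrow> L" unfolding B_def by (rule filterlim_compose[OF _ mminf])
        then show ?thesis by (auto simp: convergent_def)
      qed
      have Bm: "B n \<le> B (Suc n)" for n
        unfolding B_def GG_def using mm_Suc[where E=e and x=\<xi> and n=n, OF e(1) ne xpos xle] by auto
      have vrec: "v (Suc n) \<le> (1 - eta n / 2) * v n + 2 * (B (Suc n) - B n)" for n
      proof -
        have "v (Suc n) \<le> (if \<xi> n \<le> 1/2 then 1 - \<xi> n/2 else 1) * v n + 2 * (B (Suc n) - B n)"
          using DEC[OF z, of n] unfolding v_def B_def .
        also have "\<dots> \<le> (1 - eta n / 2) * v n + 2 * (B (Suc n) - B n)"
          using eta(4)[of n] by (intro add_right_mono mult_right_mono) (auto simp: v_def)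
        finally show ?thesis .
      qed
      have v0: "v \<longlonglongrightarrow> 0"
        by (rule v_to_zero[OF vrec _ eta(1) eta(2) Bm Bc H]) (simp add: v_def)
      have sv: "(\<lambda>n. sqrt (v n)) \<longlonglongrightarrow> 0" using tendsto_real_sqrt[OF v0] by simp
      have G: "(\<lambda>n. l2_norm (\<lambda>k. S (?mm n) k - A z k)) \<longlonglongrightarrow> 0"
        using filterlim_compose[OF F mminf] unfolding S_def by simp
      have ident: "(\<lambda>k. (\<Sum>j<n. complex_of_real (\<xi> j) * P j z k) - A z k)
          = (\<lambda>k. (S (?mm n) k - A z k) + (- l2_inner z (?dd n)) * ?dd n k)" for n
      proof
        fix k
        have "(\<Sum>j<n. complex_of_real (\<xi> j) * P j z k) = (\<Sum>j<n. l2_inner z (?ww j) * ?ww j k)"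
          using Pterm[OF z] by simp
        also have "\<dots> = (\<Sum>j<?mm n. l2_inner z (e j) * e j k) - l2_inner z (?dd n) * ?dd n k"
          using INV[where n=n] z by (simp add: eq_diff_eq)
        also have "(\<Sum>j<?mm n. l2_inner z (e j) * e j k) = S (?mm n) k"
          unfolding S_def using e(3)[OF z] by simp
        finally show "(\<Sum>j<n. complex_of_real (\<xi> j) * P j z k) - A z k
          = (S (?mm n) k - A z k) + (- l2_inner z (?dd n)) * ?dd n k" by simp
      qed
      have dl: "?dd n \<in> l2" "nsq (?dd n) = ?al n" "0 \<le> ?al n" "?al n < 1" for n using INV[where n=n] by auto
      have bound: "l2_norm (\<lambda>k. (\<Sum>j<n. complex_of_real (\<xi> j) * P j z k) - A z k)
          \<le> l2_norm (\<lambda>k. S (?mm n) k - A z k) + sqrt (v n)" for n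
      proof -
        have "l2_norm (\<lambda>k. (\<Sum>j<n. complex_of_real (\<xi> j) * P j z k) - A z k)
            \<le> l2_norm (\<lambda>k. S (?mm n) k - A z k) + l2_norm (\<lambda>k. (- l2_inner z (?dd n)) * ?dd n k)"
          unfolding ident by (rule l2_triangle[OF l2_diff[OF Sl Az] l2_scale[OF dl(1)]])
        also have "l2_norm (\<lambda>k. (- l2_inner z (?dd n)) * ?dd n k) = sqrt (v n) * sqrt (?al n)"
          unfolding l2_norm_scale[OF dl(1)] v_def l2_norm_nsq dl(2) by simp
        also have "\<dots> \<le> sqrt (v n) * 1"
          using dl(3,4)[of n] by (intro mult_left_mono) (auto simp: v_def)
        finally show ?thesis by simp
      qed
      show "A z \<in> l2 \<and> (\<lambda>n. l2_norm (\<lambda>k. (\<Sum>j<n. complex_of_real (\<xi> j) * P j z k) - A z k)) \<longlonglongrightarrow> 0"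
      proof
        show "A z \<in> l2" by (rule Az)
        show "(\<lambda>n. l2_norm (\<lambda>k. (\<Sum>j<n. complex_of_real (\<xi> j) * P j z k) - A z k)) \<longlonglongrightarrow> 0"
        proof (rule real_tendsto_sandwich[where f="\<lambda>n. 0"])
          show "eventually (\<lambda>n. 0 \<le> l2_norm (\<lambda>k. (\<Sum>j<n. complex_of_real (\<xi> j) * P j z k) - A z k)) sequentially"
            unfolding ident by (intro always_eventually allI l2_norm_nonneg l2_add l2_diff Sl Az l2_scale dl(1))
          show "eventually (\<lambda>n. l2_norm (\<lambda>k. (\<Sum>j<n. complex_of_real (\<xi> j) * P j z k) - A z k)
              \<le> l2_norm (\<lambda>k. S (?mm n) k - A z k) + sqrt (v n)) sequentially"
            by (intro always_eventually allI bound)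
          show "(\<lambda>n. l2_norm (\<lambda>k. S (?mm n) k - A z k) + sqrt (v n)) \<longlonglongrightarrow> 0"
            using tendsto_add[OF G sv] by simp
        qed simp
      qed
    qed
  qed
qed

end
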